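(* For a $q$-spin system with interaction matrix $\mathbf{B}$ and $\Delta\geq3$, \[\max_{\boldsymbol{\alpha},\boldsymbol{\beta}\in\triangle_q}\Psi_1(\boldsymbol{\alpha},\boldsymbol{\beta})=\max_{\mathbf{r},\mathbf{c}}\Phi(\mathbf{r},\mathbf{c}).\]
   Context: $\mathbf{B}=(B_{ij})$ is a symmetric $q\times q$ nonnegative matrix (irreducible, standing assumption); $\triangle_q$ is the probability simplex in $\mathbb{R}^q$. $\Psi_1(\boldsymbol{\alpha},\boldsymbol{\beta})=\max_{\mathbf{x}}[(\Delta-1)(\sum_i\alpha_i\ln\alpha_i+\sum_j\beta_j\ln\beta_j)+\Delta\sum_{i,j}x_{ij}(\ln B_{ij}-\ln x_{ij})]$ over nonnegative $\mathbf{x}\in\mathbb{R}^{q\times q}$ with $\sum_jx_{ij}=\alpha_i$, $\sum_ix_{ij}=\beta_j$ (conventions $\ln0=-\infty$, $0\ln0=0$); it equals $\lim_n\frac1n\log\mathbf{E}[Z_G^{\boldsymbol{\alpha},\boldsymbol{\beta}}]$ for a random $\Delta$-regular bipartite graph formed as the union of $\Delta$ random perfect matchings on $n+n$ vertices. With $p=\Delta/(\Delta-1)$, for nonnegative nonzero $\mathbf{r},\mathbf{c}\in\mathbb{R}^q$, $\Phi$ is defined by $\exp(\Phi(\mathbf{r},\mathbf{c})/\Delta)=\frac{\mathbf{r}^{\intercal}\mathbf{B}\mathbf{c}}{\|\mathbf{r}\|_p\|\mathbf{c}\|_p}$. *)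

theory Defs
  imports "HOL-Analysis.Analysis"
begin

fun matpow :: "('q::finite \<Rightarrow> 'q \<Rightarrow> real) \<Rightarrow> nat \<Rightarrow> 'q \<Rightarrow> 'q \<Rightarrow> real" where
  "matpow B 0 = (\<lambda>i j. if i = j then 1 else 0)"
| "matpow B (Suc k) = (\<lambda>i j. \<Sum>l\<in>UNIV. matpow B k i l * B l j)"

definition irreducible_mat :: "('q::finite \<Rightarrow> 'q \<Rightarrow> real) \<Rightarrow> bool" where
  "irreducible_mat B \<longleftrightarrow> (\<forall>i j. \<exists>k. matpow B k i j > 0)"

definition prob_simplex :: "('q::finite \<Rightarrow> real) set" where
  "prob_simplex = {a. (\<forall>i. a i \<ge> 0) \<and> (\<Sum>i\<in>UNIV. a i) = 1}"

definition couplings :: "('q::finite \<Rightarrow> real) \<Rightarrow> ('q \<Rightarrow> real) \<Rightarrow> ('q \<Rightarrow> 'q \<Rightarrow> real) set" where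
  "couplings a b = {x. (\<forall>i j. x i j \<ge> 0) \<and> (\<forall>i. (\<Sum>j\<in>UNIV. x i j) = a i)
                        \<and> (\<forall>j. (\<Sum>i\<in>UNIV. x i j) = b j)}"

text \<open>Objective with conventions ln 0 = -infinity, 0 ln 0 = 0: a term x_ij ln B_ij with
  x_ij > 0 = B_ij gives -infinity; otherwise Isabelle's real ln (ln 0 = 0) gives the right value.\<close>
definition Psi1_obj :: "nat \<Rightarrow> ('q::finite \<Rightarrow> 'q \<Rightarrow> real) \<Rightarrow> ('q \<Rightarrow> real) \<Rightarrow> ('q \<Rightarrow> real)
                        \<Rightarrow> ('q \<Rightarrow> 'q \<Rightarrow> real) \<Rightarrow> ereal" where
  "Psi1_obj \<Delta> B a b x =
     (if \<exists>i j. x i j > 0 \<and> B i j = 0 then -\<infinity>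
      else ereal ((real \<Delta> - 1) * ((\<Sum>i\<in>UNIV. a i * ln (a i)) + (\<Sum>j\<in>UNIV. b j * ln (b j)))
                  + real \<Delta> * (\<Sum>i\<in>UNIV. \<Sum>j\<in>UNIV. x i j * (ln (B i j) - ln (x i j)))))"

definition Psi1 :: "nat \<Rightarrow> ('q::finite \<Rightarrow> 'q \<Rightarrow> real) \<Rightarrow> ('q \<Rightarrow> real) \<Rightarrow> ('q \<Rightarrow> real) \<Rightarrow> ereal" where
  "Psi1 \<Delta> B a b = (SUP x\<in>couplings a b. Psi1_obj \<Delta> B a b x)"

definition pnorm :: "real \<Rightarrow> ('q::finite \<Rightarrow> real) \<Rightarrow> real" where
  "pnorm p r = (\<Sum>i\<in>UNIV. \<bar>r i\<bar> powr p) powr (1 / p)"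

definition admissible_vec :: "('q::finite \<Rightarrow> real) \<Rightarrow> bool" where
  "admissible_vec r \<longleftrightarrow> (\<forall>i. r i \<ge> 0) \<and> r \<noteq> (\<lambda>_. 0)"

definition Phi :: "nat \<Rightarrow> ('q::finite \<Rightarrow> 'q \<Rightarrow> real) \<Rightarrow> ('q \<Rightarrow> real) \<Rightarrow> ('q \<Rightarrow> real) \<Rightarrow> ereal" where
  "Phi \<Delta> B r c =
     (let p = real \<Delta> / (real \<Delta> - 1);
          t = (\<Sum>i\<in>UNIV. \<Sum>j\<in>UNIV. r i * B i j * c j) / (pnorm p r * pnorm p c)
      in if t > 0 then ereal (real \<Delta> * ln t) else -\<infinity>)"

end

theory Submission
  imports Defs
begin

lemma gibbs:
  fixes x w :: "'a \<Rightarrow> real" and A :: "'a set"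
  assumes fin: "finite A" and x0: "\<And>k. k \<in> A \<Longrightarrow> x k \<ge> 0" and w0: "\<And>k. k \<in> A \<Longrightarrow> w k \<ge> 0"
    and s1: "(\<Sum>k\<in>A. x k) = 1" and pos: "\<And>k. k \<in> A \<Longrightarrow> x k > 0 \<Longrightarrow> w k > 0"
  shows "(\<Sum>k\<in>A. x k * ln (w k / x k)) \<le> ln (\<Sum>k\<in>A. w k)"
proof -
  define S where "S = (\<Sum>k\<in>A. w k)"
  obtain k0 where k0: "k0 \<in> A" "x k0 > 0"
  proof (rule ccontr)
    assume "\<not> thesis"
    hence "\<forall>k\<in>A. x k = 0" using x0 that by force
    hence "(\<Sum>k\<in>A. x k) = 0" by simp
    with s1 show False by simp
  qed
  have Spos: "S > 0"
  proof -
    have "w k0 \<le> S" unfolding S_def using fin k0 w0 by (intro member_le_sum) auto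
    moreover have "w k0 > 0" using pos k0 by auto
    ultimately show ?thesis by simp
  qed
  have tm: "x k * ln (w k / x k) - x k * ln S \<le> w k / S - x k" if "k \<in> A" for k
  proof (cases "x k = 0")
    case True thus ?thesis using w0[OF that] Spos by simp
  next
    case False
    hence xp: "x k > 0" using x0[OF that] by simp
    hence wp: "w k > 0" using pos that by auto
    have "x k * ln (w k / x k) - x k * ln S = x k * ln (w k / (x k * S))"
      using xp wp Spos by (simp add: ln_div ln_mult algebra_simps)
    also have "\<dots> \<le> x k * (w k / (x k * S) - 1)"
      using xp wp Spos by (intro mult_left_mono ln_le_minus_one) auto
    also have "\<dots> = w k / S - x k" using xp by (simp add: field_simps)
    finally show ?thesis .
  qed
  have "(\<Sum>k\<in>A. x k * ln (w k / x k) - x k * ln S) \<le> (\<Sum>k\<in>A. w k / S - x k)"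
    using tm by (intro sum_mono) auto
  also have "\<dots> = 0" using s1 Spos by (simp add: sum_subtractf sum_divide_distrib[symmetric] S_def)
  finally have "(\<Sum>k\<in>A. x k * ln (w k / x k)) - ln S \<le> 0"
    by (simp add: sum_subtractf sum_distrib_right[symmetric] s1)
  thus ?thesis by (simp add: S_def)
qed

lemma pnorm_scale:
  fixes r :: "'q::finite \<Rightarrow> real"
  assumes "k > 0" "p > 0"
  shows "pnorm p (\<lambda>i. k * r i) = k * pnorm p r"
proof -
  have "(\<Sum>i\<in>UNIV. \<bar>k * r i\<bar> powr p) = k powr p * (\<Sum>i\<in>UNIV. \<bar>r i\<bar> powr p)"
    using assms by (simp add: abs_mult powr_mult sum_distrib_left)
  hence "pnorm p (\<lambda>i. k * r i) = (k powr p) powr (1/p) * (\<Sum>i\<in>UNIV. \<bar>r i\<bar> powr p) powr (1/p)"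
    by (simp add: pnorm_def powr_mult)
  also have "(k powr p) powr (1/p) = k" using assms by (simp add: powr_powr)
  finally show ?thesis by (simp add: pnorm_def)
qed

lemma pnorm_pos:
  fixes r :: "'q::finite \<Rightarrow> real"
  assumes "admissible_vec r" "p > 0"
  shows "pnorm p r > 0"
proof -
  from assms(1) obtain i where i: "r i \<noteq> 0" unfolding admissible_vec_def by auto
  have "\<bar>r i\<bar> powr p \<le> (\<Sum>i\<in>UNIV. \<bar>r i\<bar> powr p)" by (intro member_le_sum) auto
  moreover have "\<bar>r i\<bar> powr p > 0" using i by simp
  ultimately have "(\<Sum>i\<in>UNIV. \<bar>r i\<bar> powr p) > 0" by linarith
  thus ?thesis unfolding pnorm_def by simp
qed

definition tval :: "real \<Rightarrow> ('q::finite \<Rightarrow> 'q \<Rightarrow> real) \<Rightarrow> ('q \<Rightarrow> real) \<Rightarrow> ('q \<Rightarrow> real) \<Rightarrow> real" where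
  "tval p B r c = (\<Sum>i\<in>UNIV. \<Sum>j\<in>UNIV. r i * B i j * c j) / (pnorm p r * pnorm p c)"

lemma Phi_tval: "Phi \<Delta> B r c = (let t = tval (real \<Delta> / (real \<Delta> - 1)) B r c in
    if t > 0 then ereal (real \<Delta> * ln t) else -\<infinity>)"
  by (simp add: Phi_def tval_def Let_def)

lemma tval_scale:
  fixes r c :: "'q::finite \<Rightarrow> real"
  assumes "k > 0" "l > 0" "p > 0"
  shows "tval p B (\<lambda>i. k * r i) (\<lambda>i. l * c i) = tval p B r c"
proof -
  have "(\<Sum>i\<in>UNIV. \<Sum>j\<in>UNIV. (k * r i) * B i j * (l * c j)) = (k * l) * (\<Sum>i\<in>UNIV. \<Sum>j\<in>UNIV. r i * B i j * c j)"
    by (simp add: sum_distrib_left algebra_simps)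
  thus ?thesis using assms by (simp add: tval_def pnorm_scale)
qed

lemma pnorm_root:
  fixes a :: "'q::finite \<Rightarrow> real"
  assumes "a \<in> prob_simplex" "p > 0"
  shows "pnorm p (\<lambda>i. a i powr (1/p)) = 1"
proof -
  have "(\<Sum>i\<in>UNIV. \<bar>a i powr (1/p)\<bar> powr p) = (\<Sum>i\<in>UNIV. a i)"
    using assms by (intro sum.cong) (auto simp: powr_powr prob_simplex_def)
  thus ?thesis using assms by (simp add: pnorm_def prob_simplex_def)
qed

lemma sum_pairs: "(\<Sum>k\<in>(UNIV::('q::finite \<times> 'q) set). f k) = (\<Sum>i\<in>UNIV. \<Sum>j\<in>UNIV. f (i, j))"
  by (simp add: sum.cartesian_product)

lemma psi_upper:
  fixes B :: "'q::finite \<Rightarrow> 'q \<Rightarrow> real" and \<Delta> :: nat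
  assumes B0: "\<And>i j. B i j \<ge> 0" and D: "\<Delta> \<ge> 2"
    and a: "a \<in> prob_simplex" and b: "b \<in> prob_simplex" and x: "x \<in> couplings a b"
  defines "p \<equiv> real \<Delta> / (real \<Delta> - 1)"
  shows "Psi1_obj \<Delta> B a b x \<le> Phi \<Delta> B (\<lambda>i. a i powr (1/p)) (\<lambda>j. b j powr (1/p))"
proof (cases "\<exists>i j. x i j > 0 \<and> B i j = 0")
  case True thus ?thesis by (simp add: Psi1_obj_def)
next
  case False
  have pp: "p > 0" using D by (simp add: p_def)
  have Dp: "real \<Delta> / p = real \<Delta> - 1" using D by (simp add: p_def)
  define ra where "ra i = a i powr (1/p)" for i
  define rb where "rb j = b j powr (1/p)" for j
  define S where "S = (\<Sum>i\<in>UNIV. \<Sum>j\<in>UNIV. ra i * B i j * rb j)"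
  have x0: "\<And>i j. x i j \<ge> 0" and xa: "\<And>i. (\<Sum>j\<in>UNIV. x i j) = a i"
    and xb: "\<And>j. (\<Sum>i\<in>UNIV. x i j) = b j" using x by (auto simp: couplings_def)
  have a1: "(\<Sum>i\<in>UNIV. a i) = 1" using a by (simp add: prob_simplex_def)
  have xge_a: "x i j \<le> a i" for i j
    unfolding xa[symmetric] using x0 by (intro member_le_sum) auto
  have xge_b: "x i j \<le> b j" for i j
    unfolding xb[symmetric] using x0 by (intro member_le_sum) auto
  have Bpos: "x i j > 0 \<Longrightarrow> B i j > 0" for i j using False B0[of i j] by force
  define X where "X k = x (fst k) (snd k)" for k :: "'q \<times> 'q"
  define W where "W k = ra (fst k) * B (fst k) (snd k) * rb (snd k)" for k :: "'q \<times> 'q"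
  have G: "(\<Sum>k\<in>UNIV. X k * ln (W k / X k)) \<le> ln (\<Sum>k\<in>UNIV. W k)"
  proof (rule gibbs)
    show "(\<Sum>k\<in>UNIV. X k) = 1" unfolding sum_pairs X_def using xa a1 by simp
    show "0 \<le> X k" for k using x0 by (simp add: X_def)
    show "0 \<le> W k" for k using B0 by (simp add: W_def ra_def rb_def)
    show "0 < W k" if "0 < X k" for k
    proof -
      obtain i j where k: "k = (i, j)" by fastforce
      have "x i j > 0" using that k by (simp add: X_def)
      hence "a i > 0" "b j > 0" "B i j > 0" using xge_a[of i j] xge_b[of i j] Bpos by auto
      thus ?thesis by (simp add: W_def k ra_def rb_def)
    qed
  qed simp
  have SW: "(\<Sum>k\<in>UNIV. W k) = S" unfolding sum_pairs W_def S_def by simp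
  have tm: "x i j * ln (ra i * B i j * rb j / x i j) =
      x i j * (ln (B i j) - ln (x i j)) + (1/p) * (x i j * ln (a i)) + (1/p) * (x i j * ln (b j))" for i j
  proof (cases "x i j = 0")
    case True thus ?thesis by simp
  next
    case False
    hence xp: "x i j > 0" using x0[of i j] by simp
    hence "a i > 0" "b j > 0" "B i j > 0" using xge_a[of i j] xge_b[of i j] Bpos by auto
    thus ?thesis using xp by (simp add: ra_def rb_def ln_div ln_mult algebra_simps)
  qed
  have LA: "(\<Sum>i\<in>UNIV. \<Sum>j\<in>UNIV. x i j * ln (a i)) = (\<Sum>i\<in>UNIV. a i * ln (a i))"
    by (simp add: sum_distrib_right[symmetric] xa)
  have LB: "(\<Sum>i\<in>UNIV. \<Sum>j\<in>UNIV. x i j * ln (b j)) = (\<Sum>j\<in>UNIV. b j * ln (b j))"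
    by (subst sum.swap) (simp add: sum_distrib_right[symmetric] xb)
  define H where "H = (\<Sum>i\<in>UNIV. a i * ln (a i)) + (\<Sum>j\<in>UNIV. b j * ln (b j))"
  define Y where "Y = (\<Sum>i\<in>UNIV. \<Sum>j\<in>UNIV. x i j * (ln (B i j) - ln (x i j)))"
  have "(\<Sum>k\<in>UNIV. X k * ln (W k / X k)) = (\<Sum>i\<in>UNIV. \<Sum>j\<in>UNIV. x i j * ln (ra i * B i j * rb j / x i j))"
    unfolding sum_pairs X_def W_def by simp
  also have "\<dots> = Y + (1/p) * (\<Sum>i\<in>UNIV. \<Sum>j\<in>UNIV. x i j * ln (a i)) + (1/p) * (\<Sum>i\<in>UNIV. \<Sum>j\<in>UNIV. x i j * ln (b j))"
    unfolding tm Y_def by (simp only: sum.distrib sum_distrib_left)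
  also have "\<dots> = Y + (1/p) * H" unfolding LA LB H_def by (simp add: algebra_simps)
  finally have YH: "Y + (1/p) * H \<le> ln S" using G SW by simp
  have Spos: "S > 0"
  proof -
    obtain i j where "x i j > 0"
    proof (rule ccontr)
      assume "\<not> thesis"
      hence "\<forall>i j. x i j = 0" using x0 that by (metis less_eq_real_def)
      hence "(\<Sum>i\<in>UNIV. a i) = 0" using xa[symmetric] by simp
      with a1 show False by simp
    qed
    hence "a i > 0" "b j > 0" "B i j > 0" using xge_a[of i j] xge_b[of i j] Bpos by auto
    hence "ra i * B i j * rb j > 0" by (simp add: ra_def rb_def)
    moreover have "ra i * B i j * rb j \<le> S"
    proof -
      have W0: "0 \<le> ra i' * B i' j' * rb j'" for i' j' using B0 by (simp add: ra_def rb_def)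
      have "ra i * B i j * rb j \<le> (\<Sum>j\<in>UNIV. ra i * B i j * rb j)"
        using W0 by (intro member_le_sum) auto
      also have "\<dots> \<le> S" unfolding S_def using W0 by (intro member_le_sum sum_nonneg) auto
      finally show ?thesis .
    qed
    ultimately show ?thesis by linarith
  qed
  have obj: "Psi1_obj \<Delta> B a b x = ereal ((real \<Delta> - 1) * H + real \<Delta> * Y)"
    using False by (simp add: Psi1_obj_def H_def Y_def)
  have "(real \<Delta> - 1) * H + real \<Delta> * Y = real \<Delta> * (Y + (1/p) * H)"
  proof -
    have "real \<Delta> * (1/p) = real \<Delta> - 1" using Dp by simp
    moreover have "real \<Delta> * (Y + (1/p) * H) = real \<Delta> * Y + (real \<Delta> * (1/p)) * H"
      by (simp add: algebra_simps)
    ultimately show ?thesis by simp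
  qed
  also have "\<dots> \<le> real \<Delta> * ln S" using YH by (intro mult_left_mono) auto
  finally have le: "(real \<Delta> - 1) * H + real \<Delta> * Y \<le> real \<Delta> * ln S" .
  have "tval p B ra rb = S"
    using pnorm_root[OF a pp] pnorm_root[OF b pp]
    by (simp add: tval_def S_def ra_def[abs_def] rb_def[abs_def])
  hence "Phi \<Delta> B ra rb = ereal (real \<Delta> * ln S)"
    using Spos by (simp add: Phi_tval p_def Let_def)
  thus ?thesis using obj le by (simp add: ra_def[abs_def] rb_def[abs_def])
qed

lemma pnorm1_sum:
  fixes r :: "'q::finite \<Rightarrow> real"
  assumes "pnorm p r = 1" "p > 0" "\<And>i. r i \<ge> 0"
  shows "(\<Sum>i\<in>UNIV. r i powr p) = 1"
proof -
  define y where "y = (\<Sum>i\<in>UNIV. r i powr p)"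
  have y0: "y \<ge> 0" unfolding y_def by (intro sum_nonneg) auto
  have "y powr (1/p) = 1" using assms by (simp add: pnorm_def y_def)
  hence "(y powr (1/p)) powr p = 1" by simp
  thus ?thesis using y0 assms(2) by (simp add: powr_powr y_def)
qed

lemma kl_nonneg:
  fixes a s :: "'q::finite \<Rightarrow> real"
  assumes "a \<in> prob_simplex" "\<And>i. s i \<ge> 0" "(\<Sum>i\<in>UNIV. s i) = 1" "\<And>i. a i > 0 \<Longrightarrow> s i > 0"
  shows "(\<Sum>i\<in>UNIV. a i * ln (s i)) \<le> (\<Sum>i\<in>UNIV. a i * ln (a i))"
proof -
  have a0: "\<And>i. a i \<ge> 0" "(\<Sum>i\<in>UNIV. a i) = 1" using assms(1) by (auto simp: prob_simplex_def)
  have "(\<Sum>i\<in>UNIV. a i * ln (s i / a i)) \<le> ln (\<Sum>i\<in>UNIV. s i)"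
    using a0 assms by (intro gibbs) auto
  also have "\<dots> = 0" using assms(3) by simp
  also have "(\<Sum>i\<in>UNIV. a i * ln (s i / a i)) = (\<Sum>i\<in>UNIV. a i * ln (s i) - a i * ln (a i))"
  proof (intro sum.cong refl)
    fix i
    show "a i * ln (s i / a i) = a i * ln (s i) - a i * ln (a i)"
    proof (cases "a i = 0")
      case False
      hence "a i > 0" using a0(1)[of i] by simp
      moreover have "s i > 0" using assms(4) \<open>a i > 0\<close> by blast
      ultimately show ?thesis by (simp add: ln_div algebra_simps)
    qed simp
  qed
  finally show ?thesis by (simp add: sum_subtractf)
qed

lemma psi_lower:
  fixes B :: "'q::finite \<Rightarrow> 'q \<Rightarrow> real" and \<Delta> :: nat
  assumes B0: "\<And>i j. B i j \<ge> 0" and D: "\<Delta> \<ge> 2"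
    and r0: "\<And>i. r i \<ge> 0" and c0: "\<And>i. c i \<ge> 0"
    and rn: "pnorm (real \<Delta> / (real \<Delta> - 1)) r = 1" and cn: "pnorm (real \<Delta> / (real \<Delta> - 1)) c = 1"
    and Spos: "(\<Sum>i\<in>UNIV. \<Sum>j\<in>UNIV. r i * B i j * c j) > 0"
  shows "\<exists>a b. a \<in> prob_simplex \<and> b \<in> prob_simplex \<and>
           ereal (real \<Delta> * ln (\<Sum>i\<in>UNIV. \<Sum>j\<in>UNIV. r i * B i j * c j)) \<le> Psi1 \<Delta> B a b"
proof -
  define p where "p = real \<Delta> / (real \<Delta> - 1)"
  have pp: "p > 0" using D by (simp add: p_def)
  have Dp: "real \<Delta> * (1/p) = real \<Delta> - 1" using D by (simp add: p_def)
  define S where "S = (\<Sum>i\<in>UNIV. \<Sum>j\<in>UNIV. r i * B i j * c j)"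
  have S0: "S > 0" using Spos by (simp add: S_def)
  define x where "x i j = r i * B i j * c j / S" for i j
  define a where "a i = (\<Sum>j\<in>UNIV. x i j)" for i
  define b where "b j = (\<Sum>i\<in>UNIV. x i j)" for j
  have x0: "x i j \<ge> 0" for i j using r0 c0 B0 S0 by (simp add: x_def)
  have xs: "(\<Sum>i\<in>UNIV. \<Sum>j\<in>UNIV. x i j) = 1"
    using S0 by (simp add: x_def sum_divide_distrib[symmetric] S_def)
  have aS: "a \<in> prob_simplex" using x0 xs by (auto simp: prob_simplex_def a_def intro: sum_nonneg)
  have bS: "b \<in> prob_simplex" using x0 xs
    by (auto simp: prob_simplex_def b_def intro: sum_nonneg) (subst sum.swap, simp)
  have xC: "x \<in> couplings a b" using x0 by (auto simp: couplings_def a_def b_def)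
  have xpos: "x i j > 0 \<Longrightarrow> r i > 0 \<and> B i j > 0 \<and> c j > 0" for i j
  proof -
    assume "x i j > 0"
    hence "r i * B i j * c j > 0" using S0 by (simp add: x_def zero_less_divide_iff)
    thus ?thesis using r0[of i] B0[of i j] c0[of j]
      by (metis less_eq_real_def mult_eq_0_iff)
  qed
  have nob: "\<not> (\<exists>i j. x i j > 0 \<and> B i j = 0)" using xpos by force
  define sr where "sr i = r i powr p" for i
  define sc where "sc i = c i powr p" for i
  have lnr: "ln (r i) = (1/p) * ln (sr i)" for i using pp by (simp add: sr_def)
  have lnc: "ln (c i) = (1/p) * ln (sc i)" for i using pp by (simp add: sc_def)
  have tm: "x i j * (ln (B i j) - ln (x i j)) = x i j * ln S - x i j * ln (r i) - x i j * ln (c j)" for i j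
  proof (cases "x i j = 0")
    case False
    hence "x i j > 0" using x0[of i j] by simp
    hence "r i > 0" "B i j > 0" "c j > 0" using xpos by auto
    hence L: "ln (x i j) = ln (r i) + ln (B i j) + ln (c j) - ln S" using S0 by (simp add: x_def ln_div ln_mult)
    show ?thesis unfolding L by (simp add: algebra_simps)
  qed simp
  define Y where "Y = (\<Sum>i\<in>UNIV. \<Sum>j\<in>UNIV. x i j * (ln (B i j) - ln (x i j)))"
  have LA: "(\<Sum>i\<in>UNIV. \<Sum>j\<in>UNIV. x i j * ln (r i)) = (\<Sum>i\<in>UNIV. a i * ln (r i))"
    by (simp add: sum_distrib_right[symmetric] a_def)
  have LB: "(\<Sum>i\<in>UNIV. \<Sum>j\<in>UNIV. x i j * ln (c j)) = (\<Sum>j\<in>UNIV. b j * ln (c j))"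
    by (subst sum.swap) (simp add: sum_distrib_right[symmetric] b_def)
  have LS: "(\<Sum>i\<in>UNIV. \<Sum>j\<in>UNIV. x i j * ln S) = ln S"
    using xs by (simp add: sum_distrib_right[symmetric])
  have "Y = (\<Sum>i\<in>UNIV. \<Sum>j\<in>UNIV. x i j * ln S) - (\<Sum>i\<in>UNIV. \<Sum>j\<in>UNIV. x i j * ln (r i))
           - (\<Sum>i\<in>UNIV. \<Sum>j\<in>UNIV. x i j * ln (c j))"
    unfolding Y_def tm by (simp only: sum_subtractf)
  also have "\<dots> = ln S - (1/p) * (\<Sum>i\<in>UNIV. a i * ln (sr i)) - (1/p) * (\<Sum>j\<in>UNIV. b j * ln (sc j))"
    unfolding LA LB LS by (simp only: lnr lnc) (simp add: sum_distrib_left algebra_simps)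
  finally have Yeq: "Y = \<dots>" .
  have ka: "(\<Sum>i\<in>UNIV. a i * ln (sr i)) \<le> (\<Sum>i\<in>UNIV. a i * ln (a i))"
  proof (rule kl_nonneg[OF aS])
    show "0 \<le> sr i" for i by (simp add: sr_def)
    show "(\<Sum>i\<in>UNIV. sr i) = 1" unfolding sr_def using pnorm1_sum[OF _ pp r0] rn by (simp add: p_def)
    show "0 < sr i" if "0 < a i" for i
    proof -
      have "r i \<noteq> 0"
      proof
        assume "r i = 0" hence "a i = 0" by (simp add: a_def x_def)
        with that show False by simp
      qed
      thus ?thesis by (simp add: sr_def)
    qed
  qed
  have kb: "(\<Sum>j\<in>UNIV. b j * ln (sc j)) \<le> (\<Sum>j\<in>UNIV. b j * ln (b j))"
  proof (rule kl_nonneg[OF bS])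
    show "0 \<le> sc i" for i by (simp add: sc_def)
    show "(\<Sum>i\<in>UNIV. sc i) = 1" unfolding sc_def using pnorm1_sum[OF _ pp c0] cn by (simp add: p_def)
    show "0 < sc i" if "0 < b i" for i
    proof -
      have "c i \<noteq> 0"
      proof
        assume "c i = 0" hence "b i = 0" by (simp add: b_def x_def)
        with that show False by simp
      qed
      thus ?thesis by (simp add: sc_def)
    qed
  qed
  define H where "H = (\<Sum>i\<in>UNIV. a i * ln (a i)) + (\<Sum>j\<in>UNIV. b j * ln (b j))"
  have obj: "Psi1_obj \<Delta> B a b x = ereal ((real \<Delta> - 1) * H + real \<Delta> * Y)"
    using nob by (simp add: Psi1_obj_def H_def Y_def)
  have "real \<Delta> * Y = real \<Delta> * ln S - (real \<Delta> * (1/p)) * ((\<Sum>i\<in>UNIV. a i * ln (sr i)) + (\<Sum>j\<in>UNIV. b j * ln (sc j)))"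
    unfolding Yeq by (simp add: algebra_simps)
  also have "\<dots> = real \<Delta> * ln S - (real \<Delta> - 1) * ((\<Sum>i\<in>UNIV. a i * ln (sr i)) + (\<Sum>j\<in>UNIV. b j * ln (sc j)))"
    using Dp by simp
  finally have "(real \<Delta> - 1) * H + real \<Delta> * Y =
     real \<Delta> * ln S + (real \<Delta> - 1) * (H - ((\<Sum>i\<in>UNIV. a i * ln (sr i)) + (\<Sum>j\<in>UNIV. b j * ln (sc j))))"
    by (simp add: algebra_simps)
  moreover have "(real \<Delta> - 1) * (H - ((\<Sum>i\<in>UNIV. a i * ln (sr i)) + (\<Sum>j\<in>UNIV. b j * ln (sc j)))) \<ge> 0"
    using ka kb D unfolding H_def by (intro mult_nonneg_nonneg) auto
  ultimately have "real \<Delta> * ln S \<le> (real \<Delta> - 1) * H + real \<Delta> * Y" by linarith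
  hence "ereal (real \<Delta> * ln S) \<le> Psi1_obj \<Delta> B a b x" using obj by simp
  also have "\<dots> \<le> Psi1 \<Delta> B a b" unfolding Psi1_def using xC by (rule SUP_upper)
  finally show ?thesis using aS bS by (auto simp: S_def)
qed

lemma adm_sum_pos:
  fixes r :: "'q::finite \<Rightarrow> real"
  assumes "admissible_vec r" shows "(\<Sum>i\<in>UNIV. r i) > 0"
proof -
  from assms obtain i where i: "r i \<noteq> 0" and r0: "\<And>i. r i \<ge> 0" unfolding admissible_vec_def by auto
  have "r i \<le> (\<Sum>i\<in>UNIV. r i)" using r0 by (intro member_le_sum) auto
  moreover have "r i > 0" using i r0[of i] by simp
  ultimately show ?thesis by linarith
qed

lemma pnorm_cont:
  assumes "p > 0" and "continuous_on S f"
  shows "continuous_on S (\<lambda>z. pnorm p (\<lambda>i. (f z :: real ^ 'q::finite) $ i))"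
  unfolding pnorm_def
  using assms
  by (intro continuous_on_powr' continuous_intros continuous_on_sum) (auto intro!: sum_nonneg)

lemma tval_max:
  fixes B :: "'q::finite \<Rightarrow> 'q \<Rightarrow> real"
  assumes pp: "p > 0"
  shows "\<exists>r c. admissible_vec r \<and> admissible_vec c \<and>
     (\<forall>r' c'. admissible_vec r' \<and> admissible_vec c' \<longrightarrow> tval p B r' c' \<le> tval p B r c)"
proof -
  define Sq where "Sq = {u::real^'q. (\<forall>i. 0 \<le> u$i) \<and> sum (\<lambda>i. u$i) UNIV = 1}"
  have adm: "admissible_vec (\<lambda>i. u $ i)" if "u \<in> Sq" for u
  proof -
    have "(\<lambda>i. u $ i) \<noteq> (\<lambda>_. 0)"
    proof
      assume "(\<lambda>i. u $ i) = (\<lambda>_. 0)"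
      hence "sum (\<lambda>i. u$i) UNIV = 0" by (simp add: fun_eq_iff)
      with that show False by (simp add: Sq_def)
    qed
    thus ?thesis using that by (simp add: admissible_vec_def Sq_def)
  qed
  have cl: "closed Sq" unfolding Sq_def
    by (intro closed_Collect_conj closed_Collect_all closed_Collect_le closed_Collect_eq continuous_intros)
  have bd: "bounded Sq"
  proof -
    have "norm u \<le> 1" if "u \<in> Sq" for u
    proof -
      have "norm u \<le> sum (\<lambda>i. \<bar>u$i\<bar>) UNIV" by (rule norm_le_l1_cart)
      also have "\<dots> = 1" using that by (simp add: Sq_def)
      finally show ?thesis .
    qed
    thus ?thesis unfolding bounded_iff by blast
  qed
  have cpt: "compact (Sq \<times> Sq)" using cl bd by (intro compact_Times) (auto simp: compact_eq_bounded_closed)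
  define u0 :: "real^'q" where "u0 = (\<chi> i. 1 / real CARD('q))"
  have u0: "u0 \<in> Sq" by (simp add: Sq_def u0_def)
  define F where "F z = tval p B (\<lambda>i. fst z $ i) (\<lambda>i. snd z $ i)" for z :: "(real^'q) \<times> (real^'q)"
  have cont: "continuous_on (Sq \<times> Sq) F"
    unfolding F_def tval_def
  proof (intro continuous_on_divide continuous_on_mult pnorm_cont[OF pp] continuous_intros continuous_on_sum)
    show "\<forall>z\<in>Sq \<times> Sq. pnorm p (\<lambda>i. fst z $ i) * pnorm p (\<lambda>i. snd z $ i) \<noteq> 0"
    proof
      fix z :: "(real^'q) \<times> (real^'q)" assume "z \<in> Sq \<times> Sq"
      hence "admissible_vec (\<lambda>i. fst z $ i)" "admissible_vec (\<lambda>i. snd z $ i)" using adm by auto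
      hence "pnorm p (\<lambda>i. fst z $ i) > 0" "pnorm p (\<lambda>i. snd z $ i) > 0" using pnorm_pos pp by blast+
      thus "pnorm p (\<lambda>i. fst z $ i) * pnorm p (\<lambda>i. snd z $ i) \<noteq> 0" by simp
    qed
  qed
  obtain z where z: "z \<in> Sq \<times> Sq" and zmax: "\<And>y. y \<in> Sq \<times> Sq \<Longrightarrow> F y \<le> F z"
    using continuous_attains_sup[OF cpt _ cont] u0 by blast
  define norml where "norml r = (\<chi> i. r i / (\<Sum>i\<in>UNIV. r i))" for r :: "'q \<Rightarrow> real"
  have nS: "norml r \<in> Sq" if "admissible_vec r" for r
    using adm_sum_pos[OF that] that
    by (auto simp: Sq_def norml_def admissible_vec_def sum_divide_distrib[symmetric])
  have nT: "(\<lambda>i. norml r $ i) = (\<lambda>i. (1 / (\<Sum>i\<in>UNIV. r i)) * r i)" for r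
    by (simp add: norml_def)
  show ?thesis
  proof (intro exI conjI allI impI)
    show "admissible_vec (\<lambda>i. fst z $ i)" "admissible_vec (\<lambda>i. snd z $ i)" using z adm by auto
    fix r' c' :: "'q \<Rightarrow> real" assume rc: "admissible_vec r' \<and> admissible_vec c'"
    have "F (norml r', norml c') \<le> F z" using zmax nS rc by auto
    moreover have "F (norml r', norml c') = tval p B r' c'"
      unfolding F_def fst_conv snd_conv nT
      using adm_sum_pos rc pp by (intro tval_scale) auto
    ultimately show "tval p B r' c' \<le> tval p B (\<lambda>i. fst z $ i) (\<lambda>i. snd z $ i)" by (simp add: F_def)
  qed
qed

theorem lemma1:
  fixes B :: "'q::finite \<Rightarrow> 'q \<Rightarrow> real" and \<Delta> :: nat
  assumes "\<And>i j. B i j = B j i"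
    and "\<And>i j. B i j \<ge> 0"
    and "irreducible_mat B"
    and "\<Delta> \<ge> 3"
  shows "\<exists>a b r c. a \<in> prob_simplex \<and> b \<in> prob_simplex \<and> admissible_vec r \<and> admissible_vec c
           \<and> (\<forall>a'\<in>prob_simplex. \<forall>b'\<in>prob_simplex. Psi1 \<Delta> B a' b' \<le> Psi1 \<Delta> B a b)
           \<and> (\<forall>r' c'. admissible_vec r' \<and> admissible_vec c' \<longrightarrow> Phi \<Delta> B r' c' \<le> Phi \<Delta> B r c)
           \<and> Psi1 \<Delta> B a b = Phi \<Delta> B r c"
proof -
  have B0: "\<And>i j. B i j \<ge> 0" by fact
  have D: "\<Delta> \<ge> 2" using assms(4) by simp
  define p where "p = real \<Delta> / (real \<Delta> - 1)"
  have pp: "p > 0" using D by (simp add: p_def)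
  obtain r c where r: "admissible_vec r" and c: "admissible_vec c"
    and tm: "\<And>r' c'. admissible_vec r' \<Longrightarrow> admissible_vec c' \<Longrightarrow> tval p B r' c' \<le> tval p B r c"
    using tval_max[OF pp, of B] by blast
  have Phimax: "Phi \<Delta> B r' c' \<le> Phi \<Delta> B r c" if "admissible_vec r'" "admissible_vec c'" for r' c'
  proof (cases "tval p B r' c' > 0")
    case True
    have le: "tval p B r' c' \<le> tval p B r c" using tm that by blast
    hence "ln (tval p B r' c') \<le> ln (tval p B r c)" using True by simp
    hence "real \<Delta> * ln (tval p B r' c') \<le> real \<Delta> * ln (tval p B r c)" by (intro mult_left_mono) auto
    thus ?thesis using True le by (simp add: Phi_tval p_def[symmetric] Let_def)
  next
    case False thus ?thesis by (simp add: Phi_tval p_def[symmetric] Let_def)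
  qed
  have root_adm: "admissible_vec (\<lambda>i. a i powr (1/p))" if "a \<in> prob_simplex" for a :: "'q \<Rightarrow> real"
  proof -
    obtain i where "a i \<noteq> 0"
    proof (rule ccontr)
      assume "\<not> thesis"
      hence "\<forall>i. a i = 0" using that by blast
      hence "sum a UNIV = 0" by simp
      with \<open>a \<in> prob_simplex\<close> show False by (simp add: prob_simplex_def)
    qed
    hence "a i powr (1/p) \<noteq> 0" by simp
    thus ?thesis by (auto simp: admissible_vec_def fun_eq_iff)
  qed
  have upper: "Psi1 \<Delta> B a b \<le> Phi \<Delta> B r c" if "a \<in> prob_simplex" "b \<in> prob_simplex" for a b
    unfolding Psi1_def
  proof (rule SUP_least)
    fix x assume "x \<in> couplings a b"
    hence "Psi1_obj \<Delta> B a b x \<le> Phi \<Delta> B (\<lambda>i. a i powr (1/p)) (\<lambda>j. b j powr (1/p))"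
      using psi_upper[OF B0 D that] by (simp add: p_def)
    also have "\<dots> \<le> Phi \<Delta> B r c" using Phimax root_adm that by blast
    finally show "Psi1_obj \<Delta> B a b x \<le> Phi \<Delta> B r c" .
  qed
  show ?thesis
  proof (cases "tval p B r c > 0")
    case True
    define Nr where "Nr = pnorm p r"
    define Nc where "Nc = pnorm p c"
    have Nr: "Nr > 0" using pnorm_pos[OF r pp] by (simp add: Nr_def)
    have Nc: "Nc > 0" using pnorm_pos[OF c pp] by (simp add: Nc_def)
    define rn where "rn i = (1/Nr) * r i" for i
    define cn where "cn i = (1/Nc) * c i" for i
    have "pnorm p rn = (1/Nr) * pnorm p r" unfolding rn_def[abs_def] by (rule pnorm_scale) (use Nr pp in auto)
    hence rn1: "pnorm p rn = 1" using Nr by (simp add: Nr_def)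
    have "pnorm p cn = (1/Nc) * pnorm p c" unfolding cn_def[abs_def] by (rule pnorm_scale) (use Nc pp in auto)
    hence cn1: "pnorm p cn = 1" using Nc by (simp add: Nc_def)
    have teq: "tval p B rn cn = tval p B r c"
      unfolding rn_def[abs_def] cn_def[abs_def] using Nr Nc pp by (intro tval_scale) auto
    have tS: "tval p B rn cn = (\<Sum>i\<in>UNIV. \<Sum>j\<in>UNIV. rn i * B i j * cn j)"
      using rn1 cn1 by (simp add: tval_def)
    have rn0: "\<And>i. rn i \<ge> 0" using r Nr by (simp add: rn_def admissible_vec_def)
    have cn0: "\<And>i. cn i \<ge> 0" using c Nc by (simp add: cn_def admissible_vec_def)
    obtain a b where a: "a \<in> prob_simplex" and b: "b \<in> prob_simplex"
      and lo: "ereal (real \<Delta> * ln (\<Sum>i\<in>UNIV. \<Sum>j\<in>UNIV. rn i * B i j * cn j)) \<le> Psi1 \<Delta> B a b"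
    proof -
      have Sp: "(\<Sum>i\<in>UNIV. \<Sum>j\<in>UNIV. rn i * B i j * cn j) > 0" using True teq tS by simp
      have "\<exists>a b. a \<in> prob_simplex \<and> b \<in> prob_simplex \<and>
           ereal (real \<Delta> * ln (\<Sum>i\<in>UNIV. \<Sum>j\<in>UNIV. rn i * B i j * cn j)) \<le> Psi1 \<Delta> B a b"
        by (rule psi_lower[of B \<Delta> rn cn]) (use B0 D rn0 cn0 rn1 cn1 Sp in \<open>auto simp: p_def\<close>)
      thus ?thesis using that by blast
    qed
    have "Phi \<Delta> B r c = ereal (real \<Delta> * ln (tval p B r c))"
      using True by (simp add: Phi_tval p_def[symmetric] Let_def)
    hence PE: "Phi \<Delta> B r c = ereal (real \<Delta> * ln (\<Sum>i\<in>UNIV. \<Sum>j\<in>UNIV. rn i * B i j * cn j))"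
      using teq tS by simp
    have eq: "Psi1 \<Delta> B a b = Phi \<Delta> B r c" using lo PE upper[OF a b] by (intro antisym) auto
    show ?thesis
      using a b r c Phimax upper eq by (intro exI[of _ a] exI[of _ b] exI[of _ r] exI[of _ c]) auto
  next
    case False
    hence PE: "Phi \<Delta> B r c = -\<infinity>" by (simp add: Phi_tval p_def[symmetric] Let_def)
    define a0 :: "'q \<Rightarrow> real" where "a0 i = 1 / real CARD('q)" for i
    have a0: "a0 \<in> prob_simplex" by (simp add: prob_simplex_def a0_def)
    have allinf: "Psi1 \<Delta> B a b = -\<infinity>" if "a \<in> prob_simplex" "b \<in> prob_simplex" for a b
      using upper[OF that] PE by simp
    show ?thesis
      using a0 r c Phimax allinf PE
      by (intro exI[of _ a0] exI[of _ a0] exI[of _ r] exI[of _ c]) auto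
  qed
qed

end
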